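(* Let $(\mathfrak g,[\cdot,\cdot],\alpha,\varepsilon)$ be a multiplicative color Hom-Lie algebra and let $\rho_1,\rho_2$ be representations of $\mathfrak g$ on $(M_1,\beta_1)$ and $(M_2,\beta_2)$ respectively. Define $\rho_1\otimes\rho_2:\mathfrak g\to\mathfrak{gl}(M_1\otimes M_2)$ by $(\rho_1\otimes\rho_2)(x)(m_1\otimes m_2)=\rho_1(x)(m_1)\otimes\beta_2(m_2)+\varepsilon(x,m_1)\,\beta_1(m_1)\otimes\rho_2(x)(m_2)$ for homogeneous $x,m_1,m_2$. Then $\rho_1\otimes\rho_2$ is a representation of $\mathfrak g$ on $(M_1\otimes M_2,\beta_1\otimes\beta_2)$.
   Context: $\mathbb K$ is a field of characteristic zero and $\Gamma$ an abelian group. A bicharacter is a map $\varepsilon:\Gamma\times\Gamma\to\mathbb K\setminus\{0\}$ with $\varepsilon(a,b)\varepsilon(b,a)=1$, $\varepsilon(a,b+c)=\varepsilon(a,b)\varepsilon(a,c)$, $\varepsilon(a+b,c)=\varepsilon(a,c)\varepsilon(b,c)$; for homogeneous elements $\varepsilon(x,y)=\varepsilon(\deg x,\deg y)$. A color Hom-Lie algebra $(\mathfrak g,[\cdot,\cdot],\alpha,\varepsilon)$: $\Gamma$-graded space, even bilinear bracket, even linear $\alpha$, with $[x,y]=-\varepsilon(x,y)[y,x]$ and $\varepsilon(z,x)[\alpha(x),[y,z]]+\varepsilon(x,y)[\alpha(y),[z,x]]+\varepsilon(y,z)[\alpha(z),[x,y]]=0$; multiplicative means $\alpha([x,y])=[\alpha(x),\alpha(y)]$.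 A representation of a multiplicative color Hom-Lie algebra $\mathfrak g$ on $(M,\beta)$ ($M$ $\Gamma$-graded, $\beta$ even linear) is an even linear $\rho:\mathfrak g\to\mathfrak{gl}(M)$ with $\rho([x,y])\circ\beta=\rho(\alpha(x))\circ\rho(y)-\varepsilon(x,y)\rho(\alpha(y))\circ\rho(x)$ and $\beta(\rho(x)(m))=\rho(\alpha(x))(\beta(m))$ for all $x\in\mathfrak g$, $m\in M$. $M_1\otimes M_2$ is graded by total degree. *)

theory Defs
  imports "HOL-Library.Poly_Mapping"
begin

text \<open>
  Model of Gamma-graded vector spaces over a field k: a graded vector space is given
  together with a homogeneous basis, i.e. it is the space  'b =>0 'k  of finitely
  supported k-valued functions on a basis set 'b, each basis vector carrying a degree
  (deg :: 'b => 'a, 'a = Gamma).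
\<close>

lift_definition smul :: "'k::semiring_0 \<Rightarrow> ('b \<Rightarrow>\<^sub>0 'k) \<Rightarrow> ('b \<Rightarrow>\<^sub>0 'k)"
  is "\<lambda>c f x. c * f x"
  by (rule finite_subset[rotated]) auto

definition homog :: "('b \<Rightarrow> 'a) \<Rightarrow> 'a \<Rightarrow> ('b \<Rightarrow>\<^sub>0 'k::zero) \<Rightarrow> bool" where
  "homog deg a v \<longleftrightarrow> (\<forall>i \<in> Poly_Mapping.keys v. deg i = a)"

definition lin :: "(('b \<Rightarrow>\<^sub>0 'k::semiring_0) \<Rightarrow> ('c \<Rightarrow>\<^sub>0 'k)) \<Rightarrow> bool" where
  "lin f \<longleftrightarrow> (\<forall>u v. f (u + v) = f u + f v) \<and> (\<forall>c v. f (smul c v) = smul c (f v))"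

definition even_map :: "('b \<Rightarrow> 'a) \<Rightarrow> ('c \<Rightarrow> 'a)
    \<Rightarrow> (('b \<Rightarrow>\<^sub>0 'k::zero) \<Rightarrow> ('c \<Rightarrow>\<^sub>0 'k)) \<Rightarrow> bool" where
  "even_map degB degC f \<longleftrightarrow> (\<forall>a v. homog degB a v \<longrightarrow> homog degC a (f v))"

definition bicharacter :: "('a::ab_group_add \<Rightarrow> 'a \<Rightarrow> 'k::field) \<Rightarrow> bool" where
  "bicharacter eps \<longleftrightarrow>
     (\<forall>a b. eps a b \<noteq> 0) \<and>
     (\<forall>a b. eps a b * eps b a = 1) \<and>
     (\<forall>a b c. eps a (b + c) = eps a b * eps a c) \<and>
     (\<forall>a b c. eps (a + b) c = eps a c * eps b c)"

definition color_hom_lie :: "('g \<Rightarrow> 'a::ab_group_add)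
    \<Rightarrow> (('g \<Rightarrow>\<^sub>0 'k::field) \<Rightarrow> ('g \<Rightarrow>\<^sub>0 'k) \<Rightarrow> ('g \<Rightarrow>\<^sub>0 'k))
    \<Rightarrow> (('g \<Rightarrow>\<^sub>0 'k) \<Rightarrow> ('g \<Rightarrow>\<^sub>0 'k)) \<Rightarrow> ('a \<Rightarrow> 'a \<Rightarrow> 'k) \<Rightarrow> bool" where
  "color_hom_lie degg br alpha eps \<longleftrightarrow>
     bicharacter eps \<and>
     (\<forall>x. lin (br x)) \<and> (\<forall>y. lin (\<lambda>x. br x y)) \<and>
     (\<forall>a b x y. homog degg a x \<longrightarrow> homog degg b y \<longrightarrow> homog degg (a + b) (br x y)) \<and>
     lin alpha \<and> even_map degg degg alpha \<and>
     (\<forall>a b x y. homog degg a x \<longrightarrow> homog degg b y \<longrightarrow>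
        br x y = - smul (eps a b) (br y x)) \<and>
     (\<forall>a b c x y z. homog degg a x \<longrightarrow> homog degg b y \<longrightarrow> homog degg c z \<longrightarrow>
        smul (eps c a) (br (alpha x) (br y z)) + smul (eps a b) (br (alpha y) (br z x))
          + smul (eps b c) (br (alpha z) (br x y)) = 0)"

definition multiplicative :: "(('g \<Rightarrow>\<^sub>0 'k::field) \<Rightarrow> ('g \<Rightarrow>\<^sub>0 'k) \<Rightarrow> ('g \<Rightarrow>\<^sub>0 'k))
    \<Rightarrow> (('g \<Rightarrow>\<^sub>0 'k) \<Rightarrow> ('g \<Rightarrow>\<^sub>0 'k)) \<Rightarrow> bool" where
  "multiplicative br alpha \<longleftrightarrow> (\<forall>x y. alpha (br x y) = br (alpha x) (alpha y))"

definition is_rep :: "('g \<Rightarrow> 'a::ab_group_add)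
    \<Rightarrow> (('g \<Rightarrow>\<^sub>0 'k::field) \<Rightarrow> ('g \<Rightarrow>\<^sub>0 'k) \<Rightarrow> ('g \<Rightarrow>\<^sub>0 'k))
    \<Rightarrow> (('g \<Rightarrow>\<^sub>0 'k) \<Rightarrow> ('g \<Rightarrow>\<^sub>0 'k)) \<Rightarrow> ('a \<Rightarrow> 'a \<Rightarrow> 'k)
    \<Rightarrow> ('m \<Rightarrow> 'a) \<Rightarrow> (('m \<Rightarrow>\<^sub>0 'k) \<Rightarrow> ('m \<Rightarrow>\<^sub>0 'k))
    \<Rightarrow> (('g \<Rightarrow>\<^sub>0 'k) \<Rightarrow> ('m \<Rightarrow>\<^sub>0 'k) \<Rightarrow> ('m \<Rightarrow>\<^sub>0 'k)) \<Rightarrow> bool" where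
  "is_rep degg br alpha eps degM beta rho \<longleftrightarrow>
     lin beta \<and> even_map degM degM beta \<and>
     (\<forall>x. lin (rho x)) \<and>
     (\<forall>x y m. rho (x + y) m = rho x m + rho y m) \<and>
     (\<forall>c x m. rho (smul c x) m = smul c (rho x m)) \<and>
     (\<forall>a b x m. homog degg a x \<longrightarrow> homog degM b m \<longrightarrow> homog degM (a + b) (rho x m)) \<and>
     (\<forall>a b x y m. homog degg a x \<longrightarrow> homog degg b y \<longrightarrow>
        rho (br x y) (beta m) = rho (alpha x) (rho y m) - smul (eps a b) (rho (alpha y) (rho x m))) \<and>
     (\<forall>x m. beta (rho x m) = rho (alpha x) (beta m))"

definition tdeg :: "('b1 \<Rightarrow> 'a::plus) \<Rightarrow> ('b2 \<Rightarrow> 'a) \<Rightarrow> 'b1 \<times> 'b2 \<Rightarrow> 'a" where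
  "tdeg d1 d2 p = d1 (fst p) + d2 (snd p)"

lift_definition tens :: "('b1 \<Rightarrow>\<^sub>0 'k::semiring_0) \<Rightarrow> ('b2 \<Rightarrow>\<^sub>0 'k) \<Rightarrow> ('b1 \<times> 'b2 \<Rightarrow>\<^sub>0 'k)"
  is "\<lambda>f g p. f (fst p) * g (snd p)"
proof -
  fix f :: "'b1 \<Rightarrow> 'k" and g :: "'b2 \<Rightarrow> 'k"
  assume "finite {x. f x \<noteq> 0}" "finite {x. g x \<noteq> 0}"
  then have "finite ({x. f x \<noteq> 0} \<times> {x. g x \<noteq> 0})" by simp
  then show "finite {p. f (fst p) * g (snd p) \<noteq> 0}"
    by (rule finite_subset[rotated]) auto
qed

text \<open>Data (R, B) of the tensor product representation rho1 (x) rho2 and of beta1 (x) beta2: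
  B is the linear map with B(m1 (x) m2) = beta1 m1 (x) beta2 m2; R is linear in x, each R x is
  linear, and for homogeneous x, m1 (and any m2, by linearity this covers homogeneous m2)
  R x (m1 (x) m2) = rho1 x m1 (x) beta2 m2 + eps(x, m1) beta1 m1 (x) rho2 x m2.\<close>
definition tensor_rep_data where
  "tensor_rep_data degg eps deg1 beta1 rho1 deg2 beta2 rho2 R B \<longleftrightarrow>
     lin B \<and> (\<forall>m1 m2. B (tens m1 m2) = tens (beta1 m1) (beta2 m2)) \<and>
     (\<forall>x. lin (R x)) \<and>
     (\<forall>x y t. R (x + y) t = R x t + R y t) \<and>
     (\<forall>c x t. R (smul c x) t = smul c (R x t)) \<and>
     (\<forall>a b x m1 m2. homog degg a x \<longrightarrow> homog deg1 b m1 \<longrightarrow>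
        R x (tens m1 m2) = tens (rho1 x m1) (beta2 m2)
                           + smul (eps a b) (tens (beta1 m1) (rho2 x m2)))"

end

theory Submission
  imports Defs
begin


lemma lookup_smul[simp]: "Poly_Mapping.lookup (smul c f) x = c * Poly_Mapping.lookup f x"
  by (simp add: smul.rep_eq)
lemma lookup_tens[simp]: "Poly_Mapping.lookup (tens u v) p = Poly_Mapping.lookup u (fst p) * Poly_Mapping.lookup v (snd p)"
  by (simp add: tens.rep_eq)

lemma homog_iff: "homog d a v \<longleftrightarrow> (\<forall>i. Poly_Mapping.lookup v i \<noteq> 0 \<longrightarrow> d i = a)"
  by (auto simp: homog_def in_keys_iff)

lemma sum_single: "(\<Sum>i\<in>Poly_Mapping.keys p. Poly_Mapping.single i (Poly_Mapping.lookup p i)) = p"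
proof (rule poly_mapping_eqI)
  fix k
  show "Poly_Mapping.lookup (\<Sum>i\<in>Poly_Mapping.keys p. Poly_Mapping.single i (Poly_Mapping.lookup p i)) k = Poly_Mapping.lookup p k"
    by (auto simp: lookup_sum lookup_single when_def in_keys_iff)
qed

lemma single_smul: "Poly_Mapping.single i (c::'k::semiring_1) = smul c (Poly_Mapping.single i 1)"
  by (rule poly_mapping_eqI) (simp add: lookup_single when_def)

lemma lin_add: "lin f \<Longrightarrow> f (u + v) = f u + f v" by (simp add: lin_def)
lemma lin_smul: "lin f \<Longrightarrow> f (smul c v) = smul c (f v)" by (simp add: lin_def)
lemma lin_zero: "lin (f::('b \<Rightarrow>\<^sub>0 'k::ring) \<Rightarrow> ('c \<Rightarrow>\<^sub>0 'k)) \<Longrightarrow> f 0 = 0"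
  using lin_add[of f 0 0] by simp
lemma lin_sum: "lin (f::('b \<Rightarrow>\<^sub>0 'k::ring) \<Rightarrow> ('c \<Rightarrow>\<^sub>0 'k)) \<Longrightarrow> f (sum h A) = (\<Sum>a\<in>A. f (h a))"
proof (induction A rule: infinite_finite_induct)
  case (insert x F)
  then show ?case using lin_add[OF insert(4), of "h x" "sum h F"] by simp
qed (simp_all add: lin_zero)

lemma decomp: "p = (\<Sum>i\<in>Poly_Mapping.keys p. smul (Poly_Mapping.lookup p i) (Poly_Mapping.single i (1::'k::semiring_1)))"
proof -
  have "(\<Sum>i\<in>Poly_Mapping.keys p. Poly_Mapping.single i (Poly_Mapping.lookup p i)) = (\<Sum>i\<in>Poly_Mapping.keys p. smul (Poly_Mapping.lookup p i) (Poly_Mapping.single i (1::'k)))"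
    by (rule sum.cong[OF refl], rule single_smul)
  then show ?thesis using sum_single[of p] by simp
qed

lemma agree:
  fixes f g :: "('b \<Rightarrow>\<^sub>0 'k::ring_1) \<Rightarrow> ('c \<Rightarrow>\<^sub>0 'k)"
  assumes "lin f" "lin g" "\<And>i. P i \<Longrightarrow> f (Poly_Mapping.single i 1) = g (Poly_Mapping.single i 1)" "\<And>i. i \<in> Poly_Mapping.keys m \<Longrightarrow> P i"
  shows "f m = g m"
proof -
  have "f m = f (\<Sum>i\<in>Poly_Mapping.keys m. smul (Poly_Mapping.lookup m i) (Poly_Mapping.single i 1))" by (subst decomp) simp
  also have "\<dots> = (\<Sum>i\<in>Poly_Mapping.keys m. smul (Poly_Mapping.lookup m i) (f (Poly_Mapping.single i 1)))" by (simp add: lin_sum[OF assms(1)] lin_smul[OF assms(1)])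
  also have "\<dots> = (\<Sum>i\<in>Poly_Mapping.keys m. smul (Poly_Mapping.lookup m i) (g (Poly_Mapping.single i 1)))" using assms(3,4) by simp
  also have "\<dots> = g (\<Sum>i\<in>Poly_Mapping.keys m. smul (Poly_Mapping.lookup m i) (Poly_Mapping.single i 1))" by (simp add: lin_sum[OF assms(2)] lin_smul[OF assms(2)])
  finally show ?thesis by (subst decomp) simp
qed

lemma homog_zero[simp]: "homog d a 0" by (simp add: homog_iff)
lemma homog_add: "homog d a u \<Longrightarrow> homog d a v \<Longrightarrow> homog d a (u + v)"
  by (simp add: homog_iff lookup_add) (metis add_0)
lemma homog_smul: "homog d a u \<Longrightarrow> homog d a (smul c u)"
  by (simp add: homog_iff) (metis mult_zero_right)
lemma homog_sum: "(\<And>x. x \<in> A \<Longrightarrow> homog d a (h x)) \<Longrightarrow> homog d a (sum h A)"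
  by (induction A rule: infinite_finite_induct) (auto intro: homog_add)
lemma homog_tens: "homog d1 a u \<Longrightarrow> homog d2 b v \<Longrightarrow> homog (tdeg d1 d2) (a + b) (tens u v)"
  by (simp add: homog_iff tdeg_def) (metis mult_zero_left mult_zero_right fst_conv snd_conv)
lemma homog_single: "homog d (d i) (Poly_Mapping.single i c)"
  by (auto simp: homog_iff lookup_single when_def)

lemma homog_lin:
  fixes f :: "('b \<Rightarrow>\<^sub>0 'k::ring_1) \<Rightarrow> ('c \<Rightarrow>\<^sub>0 'k)"
  assumes "lin f" "\<And>i. i \<in> Poly_Mapping.keys m \<Longrightarrow> homog d c (f (Poly_Mapping.single i 1))"
  shows "homog d c (f m)"
proof -
  have "f m = f (\<Sum>i\<in>Poly_Mapping.keys m. smul (Poly_Mapping.lookup m i) (Poly_Mapping.single i 1))" by (subst decomp) simp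
  also have "\<dots> = (\<Sum>i\<in>Poly_Mapping.keys m. smul (Poly_Mapping.lookup m i) (f (Poly_Mapping.single i 1)))" by (simp add: lin_sum[OF assms(1)] lin_smul[OF assms(1)])
  finally show ?thesis using assms(2) by (auto intro!: homog_sum homog_smul)
qed

lemma homog_keys: "homog d a m \<Longrightarrow> i \<in> Poly_Mapping.keys m \<Longrightarrow> d i = a" by (simp add: homog_def)

lemma tens_single: "tens (Poly_Mapping.single i (1::'k::semiring_1)) (Poly_Mapping.single j 1) = Poly_Mapping.single (i,j) 1"
  by (rule poly_mapping_eqI) (auto simp: lookup_single when_def)

lemma smul_add: "smul c (u + v) = smul c u + smul c v"
  by (rule poly_mapping_eqI) (simp add: lookup_add algebra_simps)
lemma smul_smul: "smul c (smul d u) = smul (c * d) (u::'b \<Rightarrow>\<^sub>0 'k::comm_semiring_0)"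
  by (rule poly_mapping_eqI) (simp add: algebra_simps)

lemma lin_comp: "lin f \<Longrightarrow> lin g \<Longrightarrow> lin (\<lambda>x. f (g x))" by (simp add: lin_def)
lemma lin_plus: "lin f \<Longrightarrow> lin g \<Longrightarrow> lin (\<lambda>x. f x + (g x::'c\<Rightarrow>\<^sub>0'k::comm_semiring_0))"
  by (simp add: lin_def smul_add algebra_simps)
lemma lin_minus: "lin f \<Longrightarrow> lin g \<Longrightarrow> lin (\<lambda>x. f x - (g x::'c\<Rightarrow>\<^sub>0'k::comm_ring))"
  unfolding lin_def by (auto intro!: poly_mapping_eqI simp: lookup_add lookup_minus algebra_simps)
lemma lin_smulc: "lin f \<Longrightarrow> lin (\<lambda>x. smul c (f x::'c\<Rightarrow>\<^sub>0'k::comm_semiring_0))"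
  unfolding lin_def by (auto intro!: poly_mapping_eqI simp: lookup_add algebra_simps)
lemma lin_tens1: "lin (\<lambda>u. tens u v)"
  unfolding lin_def by (auto intro!: poly_mapping_eqI simp: lookup_add algebra_simps)
lemma lin_tens2: "lin (\<lambda>v. tens (u::_\<Rightarrow>\<^sub>0 'k::comm_semiring_0) v)"
  unfolding lin_def by (auto intro!: poly_mapping_eqI simp: lookup_add algebra_simps mult.left_commute)



lemma key:
  fixes A1 A2 V X1 Y1 :: "'b1 \<Rightarrow>\<^sub>0 'k::field" and U C1 C2 X2 Y2 :: "'b2 \<Rightarrow>\<^sub>0 'k"
  assumes "eab * eba = 1"
  shows "tens (A1 - smul eab A2) U + smul (eac*ebc) (tens V (C1 - smul eab C2)) =
    (tens A1 U + smul (eab*eac) (tens Y1 X2) + smul ebc (tens X1 Y2 + smul eac (tens V C1)))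
    - smul eab (tens A2 U + smul (eba*ebc) (tens X1 Y2) + smul eac (tens Y1 X2 + smul ebc (tens V C2)))"
proof (rule poly_mapping_eqI)
  fix k
  have e: "eab * (eba * z) = z" for z using assms by (metis mult.assoc mult_1)
  show "Poly_Mapping.lookup (tens (A1 - smul eab A2) U + smul (eac*ebc) (tens V (C1 - smul eab C2))) k =
    Poly_Mapping.lookup ((tens A1 U + smul (eab*eac) (tens Y1 X2) + smul ebc (tens X1 Y2 + smul eac (tens V C1)))
    - smul eab (tens A2 U + smul (eba*ebc) (tens X1 Y2) + smul eac (tens Y1 X2 + smul ebc (tens V C2)))) k"
    by (simp add: lookup_add lookup_minus algebra_simps e)
qed



lemma lin_x: "(\<forall>x y m. rho (x + y) m = rho x m + rho y m) \<Longrightarrow> (\<forall>c x m. rho (smul c x) m = smul c (rho x m)) \<Longrightarrow> lin (\<lambda>x. rho x m)"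
  by (simp add: lin_def)

lemma part2:
  fixes degg :: "'g \<Rightarrow> 'a::ab_group_add"
    and br :: "('g \<Rightarrow>\<^sub>0 'k::field_char_0) \<Rightarrow> ('g \<Rightarrow>\<^sub>0 'k) \<Rightarrow> ('g \<Rightarrow>\<^sub>0 'k)"
    and alpha :: "('g \<Rightarrow>\<^sub>0 'k) \<Rightarrow> ('g \<Rightarrow>\<^sub>0 'k)"
    and eps :: "'a \<Rightarrow> 'a \<Rightarrow> 'k"
    and deg1 :: "'b1 \<Rightarrow> 'a" and beta1 :: "('b1 \<Rightarrow>\<^sub>0 'k) \<Rightarrow> ('b1 \<Rightarrow>\<^sub>0 'k)"
    and rho1 :: "('g \<Rightarrow>\<^sub>0 'k) \<Rightarrow> ('b1 \<Rightarrow>\<^sub>0 'k) \<Rightarrow> ('b1 \<Rightarrow>\<^sub>0 'k)"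
    and deg2 :: "'b2 \<Rightarrow> 'a" and beta2 :: "('b2 \<Rightarrow>\<^sub>0 'k) \<Rightarrow> ('b2 \<Rightarrow>\<^sub>0 'k)"
    and rho2 :: "('g \<Rightarrow>\<^sub>0 'k) \<Rightarrow> ('b2 \<Rightarrow>\<^sub>0 'k) \<Rightarrow> ('b2 \<Rightarrow>\<^sub>0 'k)"
  assumes CH: "color_hom_lie degg br alpha eps"
    and r1: "is_rep degg br alpha eps deg1 beta1 rho1"
    and r2: "is_rep degg br alpha eps deg2 beta2 rho2"
    and T: "tensor_rep_data degg eps deg1 beta1 rho1 deg2 beta2 rho2 R B"
  shows "is_rep degg br alpha eps (tdeg deg1 deg2) B R"
proof -
  from CH have bi: "bicharacter eps" and alin: "lin alpha" and aev: "even_map degg degg alpha"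
    and brh: "\<And>a b x y. homog degg a x \<Longrightarrow> homog degg b y \<Longrightarrow> homog degg (a + b) (br x y)"
    unfolding color_hom_lie_def by blast+
  from bi have e1: "\<And>a b. eps a b * eps b a = 1" and e2: "\<And>a b c. eps a (b + c) = eps a b * eps a c"
    and e3: "\<And>a b c. eps (a + b) c = eps a c * eps b c" unfolding bicharacter_def by blast+
  from T have TB: "lin B" and TBt: "\<And>m1 m2. B (tens m1 m2) = tens (beta1 m1) (beta2 m2)"
    and TR: "\<And>x. lin (R x)" and TRa: "\<forall>x y t. R (x + y) t = R x t + R y t"
    and TRs: "\<forall>c x t. R (smul c x) t = smul c (R x t)"
    and TRt: "\<And>a b x m1 m2. homog degg a x \<Longrightarrow> homog deg1 b m1 \<Longrightarrow>
        R x (tens m1 m2) = tens (rho1 x m1) (beta2 m2) + smul (eps a b) (tens (beta1 m1) (rho2 x m2))"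
    unfolding tensor_rep_data_def by blast+
  from r1 have b1l: "lin beta1" and b1e: "even_map deg1 deg1 beta1" and r1l: "\<And>x. lin (rho1 x)"
    and r1a: "\<forall>x y m. rho1 (x + y) m = rho1 x m + rho1 y m"
    and r1s: "\<forall>c x m. rho1 (smul c x) m = smul c (rho1 x m)"
    and r1h: "\<And>a b x m. homog degg a x \<Longrightarrow> homog deg1 b m \<Longrightarrow> homog deg1 (a + b) (rho1 x m)"
    and r1i: "\<And>a b x y m. homog degg a x \<Longrightarrow> homog degg b y \<Longrightarrow>
        rho1 (br x y) (beta1 m) = rho1 (alpha x) (rho1 y m) - smul (eps a b) (rho1 (alpha y) (rho1 x m))"
    and r1c: "\<And>x m. beta1 (rho1 x m) = rho1 (alpha x) (beta1 m)"
    unfolding is_rep_def by blast+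
  from r2 have b2l: "lin beta2" and b2e: "even_map deg2 deg2 beta2" and r2l: "\<And>x. lin (rho2 x)"
    and r2a: "\<forall>x y m. rho2 (x + y) m = rho2 x m + rho2 y m"
    and r2s: "\<forall>c x m. rho2 (smul c x) m = smul c (rho2 x m)"
    and r2h: "\<And>a b x m. homog degg a x \<Longrightarrow> homog deg2 b m \<Longrightarrow> homog deg2 (a + b) (rho2 x m)"
    and r2i: "\<And>a b x y m. homog degg a x \<Longrightarrow> homog degg b y \<Longrightarrow>
        rho2 (br x y) (beta2 m) = rho2 (alpha x) (rho2 y m) - smul (eps a b) (rho2 (alpha y) (rho2 x m))"
    and r2c: "\<And>x m. beta2 (rho2 x m) = rho2 (alpha x) (beta2 m)"
    unfolding is_rep_def by blast+
  have b1h: "\<And>a m. homog deg1 a m \<Longrightarrow> homog deg1 a (beta1 m)" using b1e by (simp add: even_map_def)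
  have b2h: "\<And>a m. homog deg2 a m \<Longrightarrow> homog deg2 a (beta2 m)" using b2e by (simp add: even_map_def)
  have ah: "\<And>a m. homog degg a m \<Longrightarrow> homog degg a (alpha m)" using aev by (simp add: even_map_def)
  have TRx: "\<And>t. lin (\<lambda>x. R x t)" using TRa TRs by (simp add: lin_def)
  have ts: "\<And>p. Poly_Mapping.single p (1::'k) = tens (Poly_Mapping.single (fst p) 1) (Poly_Mapping.single (snd p) 1)"
    by (simp add: tens_single)
  have G2: "even_map (tdeg deg1 deg2) (tdeg deg1 deg2) B"
    unfolding even_map_def
  proof (intro allI impI)
    fix a and v :: "'b1 \<times> 'b2 \<Rightarrow>\<^sub>0 'k" assume hv: "homog (tdeg deg1 deg2) a v"
    show "homog (tdeg deg1 deg2) a (B v)"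
    proof (rule homog_lin[OF TB])
      fix p assume "p \<in> Poly_Mapping.keys v"
      then have "tdeg deg1 deg2 p = a" by (rule homog_keys[OF hv])
      then have aa: "a = deg1 (fst p) + deg2 (snd p)" by (simp add: tdeg_def)
      show "homog (tdeg deg1 deg2) a (B (Poly_Mapping.single p 1))"
        unfolding ts TBt aa by (intro homog_tens b1h b2h homog_single)
    qed
  qed
  have G6: "\<forall>a b x m. homog degg a x \<longrightarrow> homog (tdeg deg1 deg2) b m \<longrightarrow> homog (tdeg deg1 deg2) (a + b) (R x m)"
  proof (intro allI impI)
    fix a b and x :: "'g \<Rightarrow>\<^sub>0 'k" and m :: "'b1 \<times> 'b2 \<Rightarrow>\<^sub>0 'k" assume hx: "homog degg a x" and hm: "homog (tdeg deg1 deg2) b m"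
    show "homog (tdeg deg1 deg2) (a + b) (R x m)"
    proof (rule homog_lin[OF TR])
      fix p assume "p \<in> Poly_Mapping.keys m"
      then have "tdeg deg1 deg2 p = b" by (rule homog_keys[OF hm])
      then have bb: "a + b = (a + deg1 (fst p)) + deg2 (snd p)" "a + b = deg1 (fst p) + (a + deg2 (snd p))"
        by (simp_all add: tdeg_def algebra_simps)
      show "homog (tdeg deg1 deg2) (a + b) (R x (Poly_Mapping.single p 1))"
        unfolding ts TRt[OF hx homog_single]
        apply (rule homog_add)
        apply (subst bb(1)) apply (intro homog_tens b1h b2h homog_single r1h[OF hx])
        apply (rule homog_smul)
        apply (subst bb(2)) apply (intro homog_tens b1h b2h homog_single r2h[OF hx])
        done
    qed
  qed
  have G7: "\<forall>a b x y m. homog degg a x \<longrightarrow> homog degg b y \<longrightarrow>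
        R (br x y) (B m) = R (alpha x) (R y m) - smul (eps a b) (R (alpha y) (R x m))"
  proof (intro allI impI)
    fix a b and x y :: "'g \<Rightarrow>\<^sub>0 'k" and m :: "'b1 \<times> 'b2 \<Rightarrow>\<^sub>0 'k" assume hx: "homog degg a x" and hy: "homog degg b y"
    show "R (br x y) (B m) = R (alpha x) (R y m) - smul (eps a b) (R (alpha y) (R x m))"
    proof (rule agree[where P="\<lambda>_. True", of "\<lambda>m. R (br x y) (B m)" "\<lambda>m. R (alpha x) (R y m) - smul (eps a b) (R (alpha y) (R x m))"])
      show "lin (\<lambda>m. R (br x y) (B m))" by (rule lin_comp[OF TR TB])
      show "lin (\<lambda>m. R (alpha x) (R y m) - smul (eps a b) (R (alpha y) (R x m)))"
        by (intro lin_minus lin_smulc lin_comp[OF TR TR])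
    next
      fix p :: "'b1 \<times> 'b2"
      define m1 where "m1 = Poly_Mapping.single (fst p) (1::'k)"
      define m2 where "m2 = Poly_Mapping.single (snd p) (1::'k)"
      define c where "c = deg1 (fst p)"
      have hm1: "homog deg1 c m1" unfolding m1_def c_def by (rule homog_single)
      have sp: "Poly_Mapping.single p 1 = tens m1 m2" unfolding m1_def m2_def by (rule ts)
      have hax: "homog degg a (alpha x)" using ah hx .
      have hay: "homog degg b (alpha y)" using ah hy .
      have L: "R (br x y) (B (tens m1 m2)) =
          tens (rho1 (alpha x) (rho1 y m1) - smul (eps a b) (rho1 (alpha y) (rho1 x m1))) (beta2 (beta2 m2))
          + smul (eps a c * eps b c) (tens (beta1 (beta1 m1))
               (rho2 (alpha x) (rho2 y m2) - smul (eps a b) (rho2 (alpha y) (rho2 x m2))))"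
        unfolding TBt TRt[OF brh[OF hx hy] b1h[OF hm1]] r1i[OF hx hy] r2i[OF hx hy] e3 ..
      have Ry: "R (alpha x) (R y (tens m1 m2)) =
          tens (rho1 (alpha x) (rho1 y m1)) (beta2 (beta2 m2))
          + smul (eps a b * eps a c) (tens (rho1 (alpha y) (beta1 m1)) (rho2 (alpha x) (beta2 m2)))
          + smul (eps b c) (tens (rho1 (alpha x) (beta1 m1)) (rho2 (alpha y) (beta2 m2))
               + smul (eps a c) (tens (beta1 (beta1 m1)) (rho2 (alpha x) (rho2 y m2))))"
        unfolding TRt[OF hy hm1] lin_add[OF TR] lin_smul[OF TR]
          TRt[OF hax r1h[OF hy hm1]] TRt[OF hax b1h[OF hm1]] r1c r2c e2 ..
      have Rx: "R (alpha y) (R x (tens m1 m2)) =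
          tens (rho1 (alpha y) (rho1 x m1)) (beta2 (beta2 m2))
          + smul (eps b a * eps b c) (tens (rho1 (alpha x) (beta1 m1)) (rho2 (alpha y) (beta2 m2)))
          + smul (eps a c) (tens (rho1 (alpha y) (beta1 m1)) (rho2 (alpha x) (beta2 m2))
               + smul (eps b c) (tens (beta1 (beta1 m1)) (rho2 (alpha y) (rho2 x m2))))"
        unfolding TRt[OF hx hm1] lin_add[OF TR] lin_smul[OF TR]
          TRt[OF hay r1h[OF hx hm1]] TRt[OF hay b1h[OF hm1]] r1c r2c e2 ..
      show "R (br x y) (B (Poly_Mapping.single p 1)) =
         R (alpha x) (R y (Poly_Mapping.single p 1)) - smul (eps a b) (R (alpha y) (R x (Poly_Mapping.single p 1)))"
        unfolding sp L Ry Rx by (rule key[OF e1])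
    qed simp
  qed
  have G8: "\<forall>x m. B (R x m) = R (alpha x) (B m)"
  proof (intro allI)
    fix x :: "'g \<Rightarrow>\<^sub>0 'k" and m :: "'b1 \<times> 'b2 \<Rightarrow>\<^sub>0 'k"
    show "B (R x m) = R (alpha x) (B m)"
    proof (rule agree[where P="\<lambda>_. True", of "\<lambda>x. B (R x m)" "\<lambda>x. R (alpha x) (B m)"])
      show "lin (\<lambda>x. B (R x m))" by (intro lin_comp[OF TB TRx])
      show "lin (\<lambda>x. R (alpha x) (B m))" by (intro lin_comp[OF TRx alin])
    next
      fix g :: 'g
      define a where "a = degg g"
      have hx: "homog degg a (Poly_Mapping.single g 1)" unfolding a_def by (rule homog_single)
      have hax: "homog degg a (alpha (Poly_Mapping.single g 1))" using ah hx .
      show "B (R (Poly_Mapping.single g 1) m) = R (alpha (Poly_Mapping.single g 1)) (B m)"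
      proof (rule agree[where P="\<lambda>_. True", of "\<lambda>m. B (R (Poly_Mapping.single g 1) m)" "\<lambda>m. R (alpha (Poly_Mapping.single g 1)) (B m)"])
        show "lin (\<lambda>m. B (R (Poly_Mapping.single g 1) m))" by (rule lin_comp[OF TB TR])
        show "lin (\<lambda>m. R (alpha (Poly_Mapping.single g 1)) (B m))" by (rule lin_comp[OF TR TB])
      next
        fix p :: "'b1 \<times> 'b2"
        define m1 where "m1 = Poly_Mapping.single (fst p) (1::'k)"
        define m2 where "m2 = Poly_Mapping.single (snd p) (1::'k)"
        define c where "c = deg1 (fst p)"
        have hm1: "homog deg1 c m1" unfolding m1_def c_def by (rule homog_single)
        have sp: "Poly_Mapping.single p 1 = tens m1 m2" unfolding m1_def m2_def by (rule ts)
        show "B (R (Poly_Mapping.single g 1) (Poly_Mapping.single p 1)) =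
              R (alpha (Poly_Mapping.single g 1)) (B (Poly_Mapping.single p 1))"
          unfolding sp TBt TRt[OF hx hm1] TRt[OF hax b1h[OF hm1]] lin_add[OF TB] lin_smul[OF TB] r1c r2c ..
      qed simp
    qed simp
  qed
  show ?thesis unfolding is_rep_def
    using TB G2 TR TRa TRs G6 G7 G8 by blast
qed



definition ext :: "('b \<Rightarrow> ('c \<Rightarrow>\<^sub>0 'k::comm_ring_1)) \<Rightarrow> ('b \<Rightarrow>\<^sub>0 'k) \<Rightarrow> ('c \<Rightarrow>\<^sub>0 'k)" where
  "ext h t = (\<Sum>p\<in>Poly_Mapping.keys t. smul (Poly_Mapping.lookup t p) (h p))"

lemma smul_0[simp]: "smul 0 v = 0" by (rule poly_mapping_eqI) simp
lemma smul_1[simp]: "smul 1 v = (v::_ \<Rightarrow>\<^sub>0 'k::semiring_1)" by (rule poly_mapping_eqI) simp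
lemma smul_zero[simp]: "smul c 0 = 0" by (rule poly_mapping_eqI) simp
lemma lin_smul_map: "lin (smul (c::'k::comm_semiring_0))"
  unfolding lin_def by (auto intro!: poly_mapping_eqI simp: lookup_add algebra_simps)

lemma ext_superset:
  assumes "finite S" "Poly_Mapping.keys t \<subseteq> S"
  shows "ext h t = (\<Sum>p\<in>S. smul (Poly_Mapping.lookup t p) (h p))"
  unfolding ext_def
  by (rule sum.mono_neutral_left[OF assms]) (auto simp: in_keys_iff)

lemma keys_smul: "Poly_Mapping.keys (smul c t) \<subseteq> Poly_Mapping.keys t"
  by (auto simp: in_keys_iff)

lemma ext_add: "ext h (u + v) = ext h u + ext h (v::'b \<Rightarrow>\<^sub>0 'k::comm_ring_1)"
proof -
  let ?S = "Poly_Mapping.keys u \<union> Poly_Mapping.keys v"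
  have f: "finite ?S" by simp
  have "ext h (u + v) = (\<Sum>p\<in>?S. smul (Poly_Mapping.lookup (u+v) p) (h p))"
    by (rule ext_superset[OF f]) (rule keys_add)
  also have "\<dots> = (\<Sum>p\<in>?S. smul (Poly_Mapping.lookup u p) (h p)) + (\<Sum>p\<in>?S. smul (Poly_Mapping.lookup v p) (h p))"
    by (simp add: sum.distrib[symmetric] lookup_add) (rule sum.cong, auto intro!: poly_mapping_eqI simp: lookup_add algebra_simps)
  also have "\<dots> = ext h u + ext h v"
    by (simp add: ext_superset[OF f])
  finally show ?thesis .
qed

lemma ext_smul: "ext h (smul c v) = smul c (ext h (v::'b \<Rightarrow>\<^sub>0 'k::comm_ring_1))"
proof -
  have "ext h (smul c v) = (\<Sum>p\<in>Poly_Mapping.keys v. smul (Poly_Mapping.lookup (smul c v) p) (h p))"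
    by (rule ext_superset[OF finite_keys keys_smul])
  then show ?thesis by (simp add: ext_def lin_sum[OF lin_smul_map] smul_smul)
qed

lemma lin_ext: "lin (ext h)" by (simp add: lin_def ext_add ext_smul)

lemma ext_single: "ext h (Poly_Mapping.single p (1::'k::comm_ring_1)) = h p"
  by (simp add: ext_def)

lemma ext_fadd: "ext (\<lambda>p. h1 p + h2 p) t = ext h1 t + ext h2 t"
  by (simp add: ext_def smul_add sum.distrib)

lemma ext_fsmul: "ext (\<lambda>p. smul c (h p)) t = smul c (ext h t)"
  by (simp add: ext_def lin_sum[OF lin_smul_map] smul_smul mult.commute)



lemma part1:
  fixes degg :: "'g \<Rightarrow> 'a::ab_group_add"
    and eps :: "'a \<Rightarrow> 'a \<Rightarrow> 'k::field_char_0"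
    and deg1 :: "'b1 \<Rightarrow> 'a" and beta1 :: "('b1 \<Rightarrow>\<^sub>0 'k) \<Rightarrow> ('b1 \<Rightarrow>\<^sub>0 'k)"
    and rho1 :: "('g \<Rightarrow>\<^sub>0 'k) \<Rightarrow> ('b1 \<Rightarrow>\<^sub>0 'k) \<Rightarrow> ('b1 \<Rightarrow>\<^sub>0 'k)"
    and deg2 :: "'b2 \<Rightarrow> 'a" and beta2 :: "('b2 \<Rightarrow>\<^sub>0 'k) \<Rightarrow> ('b2 \<Rightarrow>\<^sub>0 'k)"
    and rho2 :: "('g \<Rightarrow>\<^sub>0 'k) \<Rightarrow> ('b2 \<Rightarrow>\<^sub>0 'k) \<Rightarrow> ('b2 \<Rightarrow>\<^sub>0 'k)"
  assumes r1: "is_rep degg br alpha eps deg1 beta1 rho1"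
    and r2: "is_rep degg br alpha eps deg2 beta2 rho2"
  shows "\<exists>R B. tensor_rep_data degg eps deg1 beta1 rho1 deg2 beta2 rho2 R B"
proof -
  from r1 have b1l: "lin beta1" and r1l: "\<And>x. lin (rho1 x)"
    and r1a: "\<forall>x y m. rho1 (x + y) m = rho1 x m + rho1 y m"
    and r1s: "\<forall>c x m. rho1 (smul c x) m = smul c (rho1 x m)"
    unfolding is_rep_def by blast+
  from r2 have b2l: "lin beta2" and r2l: "\<And>x. lin (rho2 x)"
    and r2a: "\<forall>x y m. rho2 (x + y) m = rho2 x m + rho2 y m"
    and r2s: "\<forall>c x m. rho2 (smul c x) m = smul c (rho2 x m)"
    unfolding is_rep_def by blast+
  have r1x: "\<And>m. lin (\<lambda>x. rho1 x m)" using r1a r1s by (simp add: lin_def)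
  have r2x: "\<And>m. lin (\<lambda>x. rho2 x m)" using r2a r2s by (simp add: lin_def)
  let ?e1 = "\<lambda>i. Poly_Mapping.single i (1::'k)"
  let ?e2 = "\<lambda>i. Poly_Mapping.single i (1::'k)"
  let ?eg = "\<lambda>i. Poly_Mapping.single i (1::'k)"
  define B :: "('b1 \<times> 'b2 \<Rightarrow>\<^sub>0 'k) \<Rightarrow> ('b1 \<times> 'b2 \<Rightarrow>\<^sub>0 'k)"
    where "B = ext (\<lambda>p. tens (beta1 (?e1 (fst p))) (beta2 (?e2 (snd p))))"
  define H :: "'g \<Rightarrow> 'b1 \<times> 'b2 \<Rightarrow> ('b1 \<times> 'b2 \<Rightarrow>\<^sub>0 'k)"
    where "H = (\<lambda>g p. tens (rho1 (?eg g) (?e1 (fst p))) (beta2 (?e2 (snd p)))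
          + smul (eps (degg g) (deg1 (fst p))) (tens (beta1 (?e1 (fst p))) (rho2 (?eg g) (?e2 (snd p)))))"
  define R :: "('g \<Rightarrow>\<^sub>0 'k) \<Rightarrow> ('b1 \<times> 'b2 \<Rightarrow>\<^sub>0 'k) \<Rightarrow> ('b1 \<times> 'b2 \<Rightarrow>\<^sub>0 'k)"
    where "R = (\<lambda>x t. ext (\<lambda>g. ext (H g) t) x)"
  have ts: "\<And>i j. tens (?e1 i) (?e2 j) = Poly_Mapping.single (i, j) 1"
    by (rule tens_single)
  have G1: "lin B" unfolding B_def by (rule lin_ext)
  have G2: "\<forall>m1 m2. B (tens m1 m2) = tens (beta1 m1) (beta2 m2)"
  proof (intro allI)
    fix m1 m2
    show "B (tens m1 m2) = tens (beta1 m1) (beta2 m2)"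
    proof (rule agree[where P="\<lambda>_. True", of "\<lambda>m1. B (tens m1 m2)" "\<lambda>m1. tens (beta1 m1) (beta2 m2)"])
      show "lin (\<lambda>m1. B (tens m1 m2))" by (intro lin_comp[OF G1 lin_tens1])
      show "lin (\<lambda>m1. tens (beta1 m1) (beta2 m2))" by (intro lin_comp[OF lin_tens1 b1l])
    next
      fix i
      show "B (tens (?e1 i) m2) = tens (beta1 (?e1 i)) (beta2 m2)"
      proof (rule agree[where P="\<lambda>_. True", of "\<lambda>m2. B (tens (?e1 i) m2)" "\<lambda>m2. tens (beta1 (?e1 i)) (beta2 m2)"])
        show "lin (\<lambda>m2. B (tens (?e1 i) m2))" by (intro lin_comp[OF G1 lin_tens2])
        show "lin (\<lambda>m2. tens (beta1 (?e1 i)) (beta2 m2))" by (intro lin_comp[OF lin_tens2 b2l])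
      next
        fix j
        show "B (tens (?e1 i) (?e2 j)) = tens (beta1 (?e1 i)) (beta2 (?e2 j))"
          unfolding ts B_def ext_single by simp
      qed simp
    qed simp
  qed
  have G3: "\<forall>x. lin (R x)"
    unfolding R_def lin_def by (simp add: ext_add ext_smul ext_fadd ext_fsmul)
  have G4: "\<forall>x y t. R (x + y) t = R x t + R y t" unfolding R_def by (simp add: ext_add)
  have G5: "\<forall>c x t. R (smul c x) t = smul c (R x t)" unfolding R_def by (simp add: ext_smul)
  have G6: "\<forall>a b x m1 m2. homog degg a x \<longrightarrow> homog deg1 b m1 \<longrightarrow>
        R x (tens m1 m2) = tens (rho1 x m1) (beta2 m2)
                           + smul (eps a b) (tens (beta1 m1) (rho2 x m2))"
  proof (intro allI impI)
    fix a b and x :: "'g \<Rightarrow>\<^sub>0 'k" and m1 :: "'b1 \<Rightarrow>\<^sub>0 'k" and m2 :: "'b2 \<Rightarrow>\<^sub>0 'k"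
    assume hx: "homog degg a x" and hm: "homog deg1 b m1"
    show "R x (tens m1 m2) = tens (rho1 x m1) (beta2 m2) + smul (eps a b) (tens (beta1 m1) (rho2 x m2))"
    proof (rule agree[where P="\<lambda>g. degg g = a", of "\<lambda>x. R x (tens m1 m2)"
          "\<lambda>x. tens (rho1 x m1) (beta2 m2) + smul (eps a b) (tens (beta1 m1) (rho2 x m2))"])
      show "lin (\<lambda>x. R x (tens m1 m2))" unfolding R_def by (rule lin_ext)
      show "lin (\<lambda>x. tens (rho1 x m1) (beta2 m2) + smul (eps a b) (tens (beta1 m1) (rho2 x m2)))"
        by (intro lin_plus lin_smulc lin_comp[OF lin_tens1 r1x] lin_comp[OF lin_tens2 r2x])
      show "\<And>g. g \<in> Poly_Mapping.keys x \<Longrightarrow> degg g = a" by (rule homog_keys[OF hx])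
    next
      fix g assume dg: "degg g = a"
      have Rg: "\<And>t. R (?eg g) t = ext (H g) t" unfolding R_def ext_single ..
      show "R (?eg g) (tens m1 m2) = tens (rho1 (?eg g) m1) (beta2 m2) + smul (eps a b) (tens (beta1 m1) (rho2 (?eg g) m2))"
        unfolding Rg
      proof (rule agree[where P="\<lambda>i. deg1 i = b", of "\<lambda>m1. ext (H g) (tens m1 m2)"
          "\<lambda>m1. tens (rho1 (?eg g) m1) (beta2 m2) + smul (eps a b) (tens (beta1 m1) (rho2 (?eg g) m2))"])
        show "lin (\<lambda>m1. ext (H g) (tens m1 m2))" by (intro lin_comp[OF lin_ext lin_tens1])
        show "lin (\<lambda>m1. tens (rho1 (?eg g) m1) (beta2 m2) + smul (eps a b) (tens (beta1 m1) (rho2 (?eg g) m2)))"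
          by (intro lin_plus lin_smulc lin_comp[OF lin_tens1 r1l] lin_comp[OF lin_tens1 b1l])
        show "\<And>i. i \<in> Poly_Mapping.keys m1 \<Longrightarrow> deg1 i = b" by (rule homog_keys[OF hm])
      next
        fix i assume di: "deg1 i = b"
        show "ext (H g) (tens (?e1 i) m2) = tens (rho1 (?eg g) (?e1 i)) (beta2 m2) + smul (eps a b) (tens (beta1 (?e1 i)) (rho2 (?eg g) m2))"
        proof (rule agree[where P="\<lambda>_. True", of "\<lambda>m2. ext (H g) (tens (?e1 i) m2)"
          "\<lambda>m2. tens (rho1 (?eg g) (?e1 i)) (beta2 m2) + smul (eps a b) (tens (beta1 (?e1 i)) (rho2 (?eg g) m2))"])
          show "lin (\<lambda>m2. ext (H g) (tens (?e1 i) m2))" by (intro lin_comp[OF lin_ext lin_tens2])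
          show "lin (\<lambda>m2. tens (rho1 (?eg g) (?e1 i)) (beta2 m2) + smul (eps a b) (tens (beta1 (?e1 i)) (rho2 (?eg g) m2)))"
            by (intro lin_plus lin_smulc lin_comp[OF lin_tens2 b2l] lin_comp[OF lin_tens2 r2l])
        next
          fix j
          show "ext (H g) (tens (?e1 i) (?e2 j)) = tens (rho1 (?eg g) (?e1 i)) (beta2 (?e2 j)) + smul (eps a b) (tens (beta1 (?e1 i)) (rho2 (?eg g) (?e2 j)))"
            unfolding ts ext_single H_def using dg di by simp
        qed simp
      qed
    qed
  qed
  show ?thesis unfolding tensor_rep_data_def
    using G1 G2 G3 G4 G5 G6 by blast
qed


theorem mainTheorem12:
  fixes degg :: "'g \<Rightarrow> 'a::ab_group_add"
    and br :: "('g \<Rightarrow>\<^sub>0 'k::field_char_0) \<Rightarrow> ('g \<Rightarrow>\<^sub>0 'k) \<Rightarrow> ('g \<Rightarrow>\<^sub>0 'k)"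
    and alpha :: "('g \<Rightarrow>\<^sub>0 'k) \<Rightarrow> ('g \<Rightarrow>\<^sub>0 'k)"
    and eps :: "'a \<Rightarrow> 'a \<Rightarrow> 'k"
    and deg1 :: "'b1 \<Rightarrow> 'a" and beta1 :: "('b1 \<Rightarrow>\<^sub>0 'k) \<Rightarrow> ('b1 \<Rightarrow>\<^sub>0 'k)"
    and rho1 :: "('g \<Rightarrow>\<^sub>0 'k) \<Rightarrow> ('b1 \<Rightarrow>\<^sub>0 'k) \<Rightarrow> ('b1 \<Rightarrow>\<^sub>0 'k)"
    and deg2 :: "'b2 \<Rightarrow> 'a" and beta2 :: "('b2 \<Rightarrow>\<^sub>0 'k) \<Rightarrow> ('b2 \<Rightarrow>\<^sub>0 'k)"
    and rho2 :: "('g \<Rightarrow>\<^sub>0 'k) \<Rightarrow> ('b2 \<Rightarrow>\<^sub>0 'k) \<Rightarrow> ('b2 \<Rightarrow>\<^sub>0 'k)"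
  assumes "color_hom_lie degg br alpha eps"
    and "multiplicative br alpha"
    and "is_rep degg br alpha eps deg1 beta1 rho1"
    and "is_rep degg br alpha eps deg2 beta2 rho2"
  shows "(\<exists>R B. tensor_rep_data degg eps deg1 beta1 rho1 deg2 beta2 rho2 R B) \<and>
         (\<forall>R B. tensor_rep_data degg eps deg1 beta1 rho1 deg2 beta2 rho2 R B \<longrightarrow>
                is_rep degg br alpha eps (tdeg deg1 deg2) B R)"
  proof (intro conjI allI impI)
  show "\<exists>R B. tensor_rep_data degg eps deg1 beta1 rho1 deg2 beta2 rho2 R B"
    by (rule part1[OF assms(3,4)])
next
  fix R B assume "tensor_rep_data degg eps deg1 beta1 rho1 deg2 beta2 rho2 R B"
  then show "is_rep degg br alpha eps (tdeg deg1 deg2) B R"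
    by (rule part2[OF assms(1,3,4)])
qed

end
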